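(* Let $R$ be a finite ring with identity, $\alpha\in(0,1)$, and let $\pi_U$ be the stationary distribution of the Markov chain $(X^U_t)$ on $R$ defined below. Let $n=|R|$ and $m=|U_R|$. Then for every unit $u\in U_R$, \[\pi_U(u)=\frac{\alpha}{n-m+m\alpha}.\]
   Context: $U_R$ is the group of units of $R$. The chain $(X^U_t)$: at each step an independent coin with Heads probability $\alpha$ is tossed; on Heads, $X_{t+1}=X_t+Y$ with $Y$ uniform on $R$; on Tails, $X_{t+1}=Z\cdot X_t$ with $Z$ uniform on $R$ (all independent). *)

theory Defs
  imports Complex_Main
begin

definition ring_units :: "'a::ring_1 set" where
  "ring_units = {u. \<exists>v. u * v = 1 \<and> v * u = 1}"

text \<open>Transition probability of the chain X^U: with probability alpha add a uniform
  Y (giving a uniform next state), with probability 1 - alpha multiply on the left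
  by a uniform Z.\<close>
definition trans_U :: "real \<Rightarrow> 'a::{ring_1,finite} \<Rightarrow> 'a \<Rightarrow> real" where
  "trans_U \<alpha> x y =
     \<alpha> * (1 / real (card (UNIV :: 'a set)))
     + (1 - \<alpha>) * (real (card {z::'a. z * x = y}) / real (card (UNIV :: 'a set)))"

definition stationary_U :: "real \<Rightarrow> ('a::{ring_1,finite} \<Rightarrow> real) \<Rightarrow> bool" where
  "stationary_U \<alpha> \<pi> \<longleftrightarrow>
     (\<forall>x. 0 \<le> \<pi> x) \<and> (\<Sum>x\<in>UNIV. \<pi> x) = 1 \<and>
     (\<forall>y. (\<Sum>x\<in>UNIV. \<pi> x * trans_U \<alpha> x y) = \<pi> y)"

end

theory Submission
  imports Defs
begin

lemma left_inv_unit: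
  fixes x w :: "'a::{ring_1,finite}"
  assumes "w * x = 1"
  shows "x \<in> ring_units"
proof -
  have "inj (\<lambda>y. x * y)"
  proof (rule injI)
    fix a b assume "x * a = x * b"
    then have "w * (x * a) = w * (x * b)" by simp
    then show "a = b" using assms by (simp add: mult.assoc[symmetric])
  qed
  then have "surj (\<lambda>y. x * y)" using finite_UNIV_inj_surj[OF finite_UNIV] by blast
  then obtain v where v: "x * v = 1" by (metis surjD)
  have "w = w * (x * v)" using v by simp
  also have "\<dots> = v" using assms by (simp add: mult.assoc[symmetric])
  finally have "v * x = 1" using assms by simp
  then show ?thesis using v unfolding ring_units_def by blast
qed

lemma count_unit:
  fixes x u :: "'a::{ring_1,finite}"
  assumes "u \<in> ring_units"
  shows "card {z. z * x = u} = (if x \<in> ring_units then 1 else 0)"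
proof (cases "x \<in> ring_units")
  case True
  then obtain v where v: "x * v = 1" "v * x = 1" unfolding ring_units_def by blast
  have "{z. z * x = u} = {u * v}"
  proof (rule set_eqI, rule iffI)
    fix z assume "z \<in> {z. z * x = u}"
    then have "z * x * v = u * v" by simp
    then show "z \<in> {u * v}" using v by (simp add: mult.assoc)
  next
    fix z assume "z \<in> {u * v}"
    then show "z \<in> {z. z * x = u}" using v by (simp add: mult.assoc)
  qed
  then show ?thesis using True by simp
next
  case False
  obtain ui where ui: "ui * u = 1" using assms unfolding ring_units_def by blast
  have "\<And>z. z * x \<noteq> u"
  proof
    fix z assume "z * x = u"
    then have "(ui * z) * x = 1" using ui by (simp add: mult.assoc)
    then have "x \<in> ring_units" by (rule left_inv_unit)
    then show False using False by simp
  qed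
  then have "{z. z * x = u} = {}" by auto
  then show ?thesis using False by simp
qed

theorem corollary3p4:
  fixes \<alpha> :: real and \<pi> :: "'a::{ring_1,finite} \<Rightarrow> real" and u :: 'a
  assumes "0 < \<alpha>" and "\<alpha> < 1"
    and "stationary_U \<alpha> \<pi>"
    and "u \<in> ring_units"
  shows "\<pi> u = \<alpha> / (real (card (UNIV :: 'a set)) - real (card (ring_units :: 'a set))
                     + real (card (ring_units :: 'a set)) * \<alpha>)"
proof -
  define n where "n = real (card (UNIV :: 'a set))"
  define m where "m = real (card (ring_units :: 'a set))"
  define S where "S = (\<Sum>x\<in>ring_units. \<pi> x)"
  define c where "c = \<alpha> / n + (1 - \<alpha>) / n * S"
  have st: "(\<Sum>x\<in>UNIV. \<pi> x) = 1" "\<And>y. (\<Sum>x\<in>UNIV. \<pi> x * trans_U \<alpha> x y) = \<pi> y"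
    using assms(3) unfolding stationary_U_def by auto
  have npos: "n > 0" unfolding n_def by (simp add: finite_UNIV_card_ge_0)
  have cu: "\<pi> y = c" if y: "y \<in> ring_units" for y
  proof -
    have "\<pi> y = (\<Sum>x\<in>UNIV. \<pi> x * trans_U \<alpha> x y)" using st(2) by simp
    also have "\<dots> = (\<Sum>x\<in>UNIV. \<alpha> / n * \<pi> x + (1 - \<alpha>) / n * (if x \<in> ring_units then \<pi> x else 0))"
      unfolding trans_U_def count_unit[OF y] n_def[symmetric]
      by (intro sum.cong) (auto simp: algebra_simps)
    also have "\<dots> = \<alpha> / n * (\<Sum>x\<in>UNIV. \<pi> x) + (1 - \<alpha>) / n * (\<Sum>x\<in>UNIV. if x \<in> ring_units then \<pi> x else 0)"
      by (simp add: sum.distrib sum_distrib_left)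
    also have "(\<Sum>x\<in>UNIV. if x \<in> ring_units then \<pi> x else 0) = S"
      unfolding S_def by (simp add: sum.If_cases)
    finally show ?thesis using st(1) unfolding c_def by simp
  qed
  have "S = m * c" unfolding S_def m_def using cu by simp
  moreover have "c * n = \<alpha> + (1 - \<alpha>) * S" using npos unfolding c_def
    by (simp add: field_simps)
  ultimately have eq: "c * n = \<alpha> + (1 - \<alpha>) * m * c" by simp
  have "1 \<in> (ring_units :: 'a set)" unfolding ring_units_def by auto
  then have "m \<ge> 1" unfolding m_def by (auto simp: Suc_le_eq card_gt_0_iff)
  moreover have "m \<le> n" unfolding m_def n_def by (simp add: card_mono)
  ultimately have d: "n - m + m * \<alpha> > 0" using assms(1) by (smt (verit) mult_pos_pos)
  have "c * (n - m + m * \<alpha>) = \<alpha>" using eq by (simp add: algebra_simps)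
  then have "c = \<alpha> / (n - m + m * \<alpha>)" using d by (simp add: field_simps)
  then show ?thesis using cu[OF assms(4)] unfolding n_def m_def by simp
qed

end
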